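(* Let $d=\mu_+-\mu_-$. For every $\epsilon\in[0,d/4]$ and every $K\in(1,\bar B_K(\epsilon)]$, where $$\bar B_K(\epsilon)=\min\left\{\exp\!\left(\frac{(d-2\epsilon)^2}{2}\right),\ \phi^{-1}\!\left(\frac{d}{\epsilon}-2\right)\right\}$$ (with $\phi^{-1}(+\infty):=+\infty$ when $\epsilon=0$), and $\phi^{-1}$ is the inverse of the bijection $\phi:[1,+\infty)\to[2,+\infty)$, $\phi(x)=x+1/x$, one has $$R^{\epsilon}_{\mathrm{bdy}}(\theta_{\mathrm f})\;\ge\;R^{\epsilon}_{\mathrm{bdy}}(\theta^* )\;\ge\;R^{\epsilon}_{\mathrm{bdy}}(\theta^{(\epsilon)}_{\mathrm r}).$$
   Context: Setting (one-dimensional Gaussian mixture). Fix real numbers $\mu_-<\mu_+$ and $K>1$, and let $d=\mu_+-\mu_-$. Let $(X,Y)$ be a random pair with $\Pr(Y=1)=\Pr(Y=-1)=\tfrac12$, $X\mid Y=-1\sim\mathcal N(\mu_-,1)$, and $X\mid Y=1\sim\mathcal N(\mu_+,K^2)$. For $\theta\in\mathbb R$, $f_\theta(x)=1$ if $x>\theta$ and $f_\theta(x)=-1$ otherwise. Class-conditional errors: $e_+(\theta)=\Pr(X\le\theta\mid Y=1)$, $e_-(\theta)=\Pr(X>\theta\mid Y=-1)$. Natural error: $R_{\mathrm{nat}}(\theta)=\tfrac12 e_+(\theta)+\tfrac12 e_-(\theta)$. For $\epsilon\ge0$, robust error: $R_{\mathrm{rob}}^{\epsilon}(\theta)=\tfrac12\Pr(X\le\theta+\epsilon\mid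 Y=1)+\tfrac12\Pr(X>\theta-\epsilon\mid Y=-1)$; boundary error: $R^{\epsilon}_{\mathrm{bdy}}(\theta)=\Pr(\exists\tau,\ |\tau|\le\epsilon,\ f_\theta(X+\tau)\ne f_\theta(X),\ f_\theta(X)=Y)=\tfrac12\Pr(\theta<X\le\theta+\epsilon\mid Y=1)+\tfrac12\Pr(\theta-\epsilon<X\le\theta\mid Y=-1)$. Optimal models: $\theta^*$ minimizes $R_{\mathrm{nat}}$ over $[\mu_-,\mu_+]$; $\theta_{\mathrm f}$ is the threshold in $[\mu_-,\mu_+]$ with $e_+(\theta_{\mathrm f})=e_-(\theta_{\mathrm f})$; $\theta^{(\epsilon)}_{\mathrm r}$ minimizes $R^{\epsilon}_{\mathrm{rob}}$ over $[\mu_-,\mu_+]$. *)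

theory Defs
  imports "HOL-Probability.Probability"
begin

definition gauss_prob :: "real \<Rightarrow> real \<Rightarrow> real set \<Rightarrow> real" where
  "gauss_prob mu sd A = measure (density lborel (normal_density mu sd)) A"

text \<open>Class-conditional errors: X | Y=1 ~ N(mu_p, K^2), X | Y=-1 ~ N(mu_m, 1).\<close>
definition e_plus :: "real \<Rightarrow> real \<Rightarrow> real \<Rightarrow> real" where
  "e_plus mu_p K \<theta> = gauss_prob mu_p K {..\<theta>}"

definition e_minus :: "real \<Rightarrow> real \<Rightarrow> real" where
  "e_minus mu_m \<theta> = gauss_prob mu_m 1 {\<theta><..}"

definition R_nat :: "real \<Rightarrow> real \<Rightarrow> real \<Rightarrow> real \<Rightarrow> real" where
  "R_nat mu_m mu_p K \<theta> = e_plus mu_p K \<theta> / 2 + e_minus mu_m \<theta> / 2"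

definition R_rob :: "real \<Rightarrow> real \<Rightarrow> real \<Rightarrow> real \<Rightarrow> real \<Rightarrow> real" where
  "R_rob mu_m mu_p K \<epsilon> \<theta> =
     gauss_prob mu_p K {..\<theta> + \<epsilon>} / 2 + gauss_prob mu_m 1 {\<theta> - \<epsilon><..} / 2"

definition R_bdy :: "real \<Rightarrow> real \<Rightarrow> real \<Rightarrow> real \<Rightarrow> real \<Rightarrow> real" where
  "R_bdy mu_m mu_p K \<epsilon> \<theta> =
     gauss_prob mu_p K {\<theta><..\<theta> + \<epsilon>} / 2 + gauss_prob mu_m 1 {\<theta> - \<epsilon><..\<theta>} / 2"

definition phi :: "real \<Rightarrow> real" where
  "phi x = x + 1 / x"

definition phi_inv :: "real \<Rightarrow> real" where
  "phi_inv y = (THE x. x \<ge> 1 \<and> phi x = y)"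

end

theory Submission
  imports Defs
begin


lemma nd_cont[continuous_intros]: "s > 0 \<Longrightarrow> continuous_on S (normal_density mu s)"
  unfolding normal_density_def by (intro continuous_intros) auto

lemma nd_isCont: "s > 0 \<Longrightarrow> isCont (normal_density mu s) x"
  unfolding normal_density_def by (intro continuous_intros) auto

lemma gp_Ioc: assumes "a \<le> b" and "s > 0"
  shows "gauss_prob mu s {a<..b} = gauss_prob mu s {..b} - gauss_prob mu s {..a}"
proof -
  interpret prob_space "density lborel (normal_density mu s)" using prob_space_normal_density assms by blast
  have *: "{..b} = {..a} \<union> {a<..b}" using assms by auto
  have "measure (density lborel (normal_density mu s)) {..b} = measure (density lborel (normal_density mu s)) {..a} + measure (density lborel (normal_density mu s)) {a<..b}"
    unfolding * by (rule finite_measure_Union) auto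
  then show ?thesis unfolding gauss_prob_def by simp
qed

lemma gp_Ioi: assumes "s > 0" shows "gauss_prob mu s {a<..} = 1 - gauss_prob mu s {..a}"
proof -
  interpret prob_space "density lborel (normal_density mu s)" using prob_space_normal_density assms by blast
  have *: "{a<..} = space (density lborel (normal_density mu s)) - {..a}" by auto
  show ?thesis unfolding gauss_prob_def * by (subst prob_compl) auto
qed

lemma gp_set: assumes "A \<in> sets borel" "s > 0"
  shows "gauss_prob mu s A = (LINT x:A|lborel. normal_density mu s x)"
proof -
  interpret prob_space "density lborel (normal_density mu s)" using prob_space_normal_density assms by blast
  have "gauss_prob mu s A = integral\<^sup>L (density lborel (normal_density mu s)) (indicator A)"
    unfolding gauss_prob_def using assms by simp
  also have "\<dots> = integral\<^sup>L lborel (\<lambda>x. normal_density mu s x *\<^sub>R indicator A x)"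
    using assms by (intro integral_density) auto
  also have "\<dots> = (LINT x:A|lborel. normal_density mu s x)"
    unfolding set_lebesgue_integral_def by (simp add: mult.commute)
  finally show ?thesis .
qed

lemma gp_interval: assumes "a \<le> b" "s > 0"
  shows "gauss_prob mu s {a<..b} = (LBINT x=a..b. normal_density mu s x)"
  using assms by (simp add: gp_set interval_integral_Ioc)

lemma gp_cdf_int: assumes "s > 0" shows "gauss_prob mu s {..u} = gauss_prob mu s {..c} + (LBINT x=c..u. normal_density mu s x)"
proof (cases "c \<le> u")
  case True then show ?thesis using gp_interval[OF True assms, of mu] gp_Ioc[OF True assms, of mu] by linarith
next
  case False then have "u \<le> c" by simp
  then show ?thesis using gp_interval[of u c s mu] gp_Ioc[of u c s mu] assms
    using interval_integral_endpoints_reverse[of c u "normal_density mu s"] by linarith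
qed

lemma gp_deriv: assumes "s > 0" shows "((\<lambda>x. gauss_prob mu s {..x}) has_real_derivative normal_density mu s x) (at x)"
proof -
  have "((\<lambda>u. LBINT y=x-1..u. normal_density mu s y) has_vector_derivative normal_density mu s x) (at x within {x-1..x+1})"
    by (rule interval_integral_FTC2) (auto intro: continuous_intros assms)
  then have "((\<lambda>u. LBINT y=x-1..u. normal_density mu s y) has_real_derivative normal_density mu s x) (at x)"
    by (simp add: has_real_derivative_iff_has_vector_derivative at_within_Icc_at)
  then have "((\<lambda>u. gauss_prob mu s {..x-1} + (LBINT y=x-1..u. normal_density mu s y)) has_real_derivative normal_density mu s x) (at x)"
    by (auto intro!: derivative_eq_intros)
  then show ?thesis by (simp add: gp_cdf_int[OF assms, of mu _ "x-1", symmetric])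
qed

lemma nd_deriv: assumes "s > 0" shows "(normal_density mu s has_real_derivative (-(x-mu)/s\<^sup>2 * normal_density mu s x)) (at x)"
proof -
  have 1: "((\<lambda>x. -(x-mu)\<^sup>2/(2 * s\<^sup>2)) has_real_derivative (-(x-mu)/s\<^sup>2)) (at x)"
    using assms by (auto intro!: derivative_eq_intros simp: field_simps power2_eq_square)
  have 2: "((\<lambda>x. exp (-(x-mu)\<^sup>2/(2 * s\<^sup>2))) has_real_derivative exp (-(x-mu)\<^sup>2/(2 * s\<^sup>2)) * (-(x-mu)/s\<^sup>2)) (at x)"
    by (rule DERIV_chain2[OF DERIV_exp 1])
  have 3: "((\<lambda>x. 1 / sqrt (2 * pi * s\<^sup>2) * exp (-(x-mu)\<^sup>2/(2 * s\<^sup>2))) has_real_derivative 1 / sqrt (2 * pi * s\<^sup>2) * (exp (-(x-mu)\<^sup>2/(2 * s\<^sup>2)) * (-(x-mu)/s\<^sup>2))) (at x)"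
    by (rule DERIV_cmult[OF 2])
  have f: "normal_density mu s = (\<lambda>x. 1 / sqrt (2 * pi * s\<^sup>2) * exp (-(x-mu)\<^sup>2/(2 * s\<^sup>2)))"
    by (rule ext) (simp add: normal_density_def)
  show ?thesis unfolding f by (rule DERIV_cong[OF 3]) (simp add: mult_ac)
qed

lemma gp_lims: assumes "s > 0"
  shows "((\<lambda>x. gauss_prob mu s {..x}) \<longlongrightarrow> 0) at_bot"
    and "((\<lambda>x. gauss_prob mu s {..x}) \<longlongrightarrow> 1) at_top"
proof -
  have "real_distribution (density lborel (normal_density mu s))"
    unfolding real_distribution_def real_distribution_axioms_def
    using assms by (simp add: prob_space_normal_density)
  then interpret real_distribution "density lborel (normal_density mu s)" .
  show "((\<lambda>x. gauss_prob mu s {..x}) \<longlongrightarrow> 0) at_bot"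
    using cdf_lim_at_bot unfolding cdf_def gauss_prob_def .
  show "((\<lambda>x. gauss_prob mu s {..x}) \<longlongrightarrow> 1) at_top"
    using cdf_lim_at_top_prob unfolding cdf_def gauss_prob_def .
qed

lemma theta0_sum:
  fixes mm mp K :: real
  assumes K: "K > 0"
  defines "t0 \<equiv> mm + (mp - mm) / (K + 1)"
  shows "gauss_prob mp K {..t0} + gauss_prob mm 1 {..t0} = 1"
proof -
  define w where "w = (\<lambda>s. gauss_prob mp K {..mp - K * s} + gauss_prob mm 1 {..mm + s})"
  have nd_eq: "normal_density mp K (mp - K * s) * K = normal_density mm 1 (mm + s)" for s
  proof -
    have "sqrt (2 * pi * K\<^sup>2) = K * sqrt (2 * pi)"
      using K by (simp add: real_sqrt_mult)
    moreover have "(mp - K * s - mp)\<^sup>2 / (2 * K\<^sup>2) = s\<^sup>2 / 2"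
      using K by (simp add: power2_eq_square field_simps)
    ultimately show ?thesis using K by (simp add: normal_density_def)
  qed
  have "\<forall>s. (w has_real_derivative 0) (at s)"
  proof
    fix s
    have "(w has_real_derivative normal_density mp K (mp - K * s) * (-K) + normal_density mm 1 (mm + s) * 1) (at s)"
      unfolding w_def
      by (intro derivative_intros DERIV_chain2[OF gp_deriv[OF K]] DERIV_chain2[OF gp_deriv]) (auto intro!: derivative_eq_intros)
    then show "(w has_real_derivative 0) (at s)" using nd_eq[of s] by simp
  qed
  then have wc: "w s = w 0" for s by (rule DERIV_isconst_all)
  have "filterlim (\<lambda>s. K * s) at_top at_top"
    using K by (intro filterlim_tendsto_pos_mult_at_top[OF tendsto_const] filterlim_ident) auto
  then have "filterlim (\<lambda>s. (- mp) + K * s) at_top at_top"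
    by (intro filterlim_tendsto_add_at_top[OF tendsto_const]) 
  then have "filterlim (\<lambda>s. - ((- mp) + K * s)) at_bot at_top"
    by (simp only: filterlim_uminus_at_top[symmetric])
  then have l1: "filterlim (\<lambda>s. mp - K * s) at_bot at_top" by simp
  have l2: "filterlim (\<lambda>s. mm + s) at_top at_top"
    using filterlim_ident filterlim_tendsto_add_at_top by fastforce
  have lim: "(w \<longlongrightarrow> 0 + 1) at_top"
    unfolding w_def
    by (intro tendsto_add filterlim_compose[OF gp_lims(1)[OF K] l1] filterlim_compose[OF gp_lims(2) l2]) auto
  define c where "c = w 0"
  have wfun: "w = (\<lambda>_::real. c)" using wc c_def by auto
  have "((\<lambda>_::real. c) \<longlongrightarrow> 0 + 1) at_top" using lim by (simp only: wfun)
  then have "c = 0 + 1" by (rule tendsto_const_iff[OF trivial_limit_at_top_linorder, THEN iffD1])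
  then have "((\<lambda>_::real. w 0) \<longlongrightarrow> 0 + 1) at_top" using c_def by simp
  then have w0: "w 0 = 0 + 1" by (rule tendsto_const_iff[OF trivial_limit_at_top_linorder, THEN iffD1])
  have "mp - K * ((mp - mm) / (K + 1)) = t0" "mm + (mp - mm) / (K + 1) = t0"
    unfolding t0_def using K by (auto simp: field_simps)
  then show ?thesis using wc[of "(mp - mm) / (K + 1)"] w0 unfolding w_def by simp
qed

lemma sum_strict_mono:
  fixes mm mp K :: real
  assumes K: "K > 0" and "a < b"
  shows "gauss_prob mp K {..a} + gauss_prob mm 1 {..a} < gauss_prob mp K {..b} + gauss_prob mm 1 {..b}"
  using assms(2)
proof (rule DERIV_pos_imp_increasing)
  fix x
  show "\<exists>y. ((\<lambda>x. gauss_prob mp K {..x} + gauss_prob mm 1 {..x}) has_real_derivative y) (at x) \<and> 0 < y"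
  proof (intro exI conjI)
    show "((\<lambda>x. gauss_prob mp K {..x} + gauss_prob mm 1 {..x}) has_real_derivative normal_density mp K x + normal_density mm 1 x) (at x)"
      using K by (intro DERIV_add gp_deriv) auto
    show "0 < normal_density mp K x + normal_density mm 1 x"
      using K by (intro add_pos_pos normal_density_pos) auto
  qed
qed



lemma nd_cmp:
  fixes K :: real assumes K: "K > 0"
  shows "normal_density mp K x \<le> normal_density mm 1 y \<longleftrightarrow> exp ((y-mm)\<^sup>2/2 - (x-mp)\<^sup>2/(2 * K\<^sup>2)) \<le> K"
    and "normal_density mp K x < normal_density mm 1 y \<longleftrightarrow> exp ((y-mm)\<^sup>2/2 - (x-mp)\<^sup>2/(2 * K\<^sup>2)) < K"
proof -
  define A where "A = -(x-mp)\<^sup>2/(2 * K\<^sup>2)"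
  define B where "B = -(y-mm)\<^sup>2/2"
  define c where "c = sqrt (2*pi)"
  have c: "c > 0" unfolding c_def by simp
  have n1: "normal_density mp K x = exp A / (K * c)"
    using K unfolding normal_density_def A_def c_def by (simp add: real_sqrt_mult)
  have n2: "normal_density mm 1 y = exp B / c"
    unfolding normal_density_def B_def c_def by simp
  have e: "exp ((y-mm)\<^sup>2/2 - (x-mp)\<^sup>2/(2 * K\<^sup>2)) = exp A / exp B"
    unfolding A_def B_def by (simp add: exp_diff[symmetric])
  show "normal_density mp K x \<le> normal_density mm 1 y \<longleftrightarrow> exp ((y-mm)\<^sup>2/2 - (x-mp)\<^sup>2/(2 * K\<^sup>2)) \<le> K"
    unfolding n1 n2 e using K c by (simp add: field_simps)
  show "normal_density mp K x < normal_density mm 1 y \<longleftrightarrow> exp ((y-mm)\<^sup>2/2 - (x-mp)\<^sup>2/(2 * K\<^sup>2)) < K"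
    unfolding n1 n2 e using K c by (simp add: field_simps)
qed

lemma E_mono:
  fixes K a b mm mp :: real
  assumes "mm \<le> a" "a \<le> b" "b \<le> mp" "K > 0"
  shows "(a-mm)\<^sup>2/2 - (a-mp)\<^sup>2/(2 * K\<^sup>2) \<le> (b-mm)\<^sup>2/2 - (b-mp)\<^sup>2/(2 * K\<^sup>2)"
proof -
  have id: "(K\<^sup>2*(b-mm)\<^sup>2 - (b-mp)\<^sup>2) - (K\<^sup>2*(a-mm)\<^sup>2 - (a-mp)\<^sup>2) = (b-a) * (K\<^sup>2*(a+b-2*mm) + (2*mp - a - b))"
    by (simp add: power2_eq_square algebra_simps)
  have "(b-a) * (K\<^sup>2*(a+b-2*mm) + (2*mp - a - b)) \<ge> 0"
    using assms by (intro mult_nonneg_nonneg add_nonneg_nonneg) auto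
  then have "K\<^sup>2*(a-mm)\<^sup>2 - (a-mp)\<^sup>2 \<le> K\<^sup>2*(b-mm)\<^sup>2 - (b-mp)\<^sup>2" using id by linarith
  then have "(K\<^sup>2*(a-mm)\<^sup>2 - (a-mp)\<^sup>2) / (2 * K\<^sup>2) \<le> (K\<^sup>2*(b-mm)\<^sup>2 - (b-mp)\<^sup>2) / (2 * K\<^sup>2)"
    using assms by (intro divide_right_mono) auto
  then show ?thesis using assms by (simp add: diff_divide_distrib)
qed

lemma core:
  fixes K x t e d :: real
  assumes "K > 1" "(K+1)*x \<ge> d" "0 \<le> t" "t \<le> e" "e*(K+1)\<^sup>2 \<le> d*K"
  shows "(K\<^sup>2-1)*t \<le> (K\<^sup>2+1)*x - d"
proof -
  have "(K-1)*(K+1)\<^sup>2*t \<le> (K-1)*(K+1)\<^sup>2*e"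
    using assms by (intro mult_left_mono) auto
  also have "\<dots> = (K-1)*(e*(K+1)\<^sup>2)" by simp
  also have "\<dots> \<le> (K-1)*(d*K)" using assms by (intro mult_left_mono) auto
  finally have 1: "(K-1)*(K+1)\<^sup>2*t \<le> (K-1)*(d*K)" .
  have 2: "(K\<^sup>2+1)*((K+1)*x) \<ge> (K\<^sup>2+1)*d" using assms by (intro mult_left_mono) auto
  have "(K+1)*((K\<^sup>2-1)*t) \<le> (K+1)*((K\<^sup>2+1)*x - d)"
    using 1 2 by (simp add: power2_eq_square algebra_simps)
  then show ?thesis using assms by simp
qed

lemma shift:
  fixes K x t d :: real
  assumes "K > 0" "0 \<le> t" "(K\<^sup>2-1)*t \<le> (K\<^sup>2+1)*x - d" "(K\<^sup>2-1)*t \<ge> 0"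
  shows "(x-t)\<^sup>2/2 - (x+t-d)\<^sup>2/(2 * K\<^sup>2) \<le> x\<^sup>2/2 - (x-d)\<^sup>2/(2 * K\<^sup>2)"
proof -
  have id: "(K\<^sup>2*(x-t)\<^sup>2 - (x+t-d)\<^sup>2) - (K\<^sup>2*x\<^sup>2 - (x-d)\<^sup>2) = t * ((K\<^sup>2-1)*t - 2*((K\<^sup>2+1)*x - d))"
    by (simp add: power2_eq_square algebra_simps)
  have "t * ((K\<^sup>2-1)*t - 2*((K\<^sup>2+1)*x - d)) \<le> 0"
    using assms by (intro mult_nonneg_nonpos) auto
  then have "K\<^sup>2*(x-t)\<^sup>2 - (x+t-d)\<^sup>2 \<le> K\<^sup>2*x\<^sup>2 - (x-d)\<^sup>2" using id by linarith
  then have "(K\<^sup>2*(x-t)\<^sup>2 - (x+t-d)\<^sup>2) / (2 * K\<^sup>2) \<le> (K\<^sup>2*x\<^sup>2 - (x-d)\<^sup>2) / (2 * K\<^sup>2)"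
    using assms by (intro divide_right_mono) auto
  then show ?thesis using assms by (simp add: diff_divide_distrib)
qed

lemma phi_mono: "1 \<le> a \<Longrightarrow> a \<le> b \<Longrightarrow> phi a \<le> phi b"
proof -
  assume a: "1 \<le> a" "a \<le> b"
  have "phi b - phi a = (b - a) * (1 - 1/(a*b))"
    using a unfolding phi_def by (simp add: field_simps)
  moreover have "1 \<le> a*b" using mult_mono[of 1 a 1 b] a by simp
  then have "1/(a*b) \<le> 1" by simp
  then have "(b - a) * (1 - 1/(a*b)) \<ge> 0" using a by (intro mult_nonneg_nonneg) auto
  ultimately show ?thesis by linarith
qed

lemma phi_inv_prop: assumes "y \<ge> 2" shows "phi_inv y \<ge> 1 \<and> phi (phi_inv y) = y"
proof -
  have yy: "2 * 2 \<le> y * y" using assms by (intro mult_mono) auto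
  define sq where "sq = sqrt (y * y - 4)"
  have sq0: "sq \<ge> 0" unfolding sq_def using yy by simp
  have sq2: "sq * sq = y * y - 4" unfolding sq_def using yy by simp
  define x0 where "x0 = (y + sq) / 2"
  have "y + sq \<ge> 2" using sq0 assms by linarith
  then have x1: "x0 \<ge> 1" unfolding x0_def by simp
  have "4 * (x0 * x0 - y * x0 + 1) = (y + sq) * (y + sq) - 2 * y * (y + sq) + 4"
    unfolding x0_def by (simp add: field_simps)
  also have "\<dots> = sq * sq - y * y + 4" by (simp add: algebra_simps)
  also have "\<dots> = 0" using sq2 by simp
  finally have q: "x0 * x0 + 1 = y * x0" by simp
  have "phi x0 = (x0 * x0 + 1) / x0" unfolding phi_def using x1 by (simp add: add_divide_distrib)
  also have "\<dots> = y" using q x1 by simp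
  finally have px: "phi x0 = y" .
  have uniq: "x = x0" if "x \<ge> 1" "phi x = y" for x
  proof -
    have "phi x0 - phi x = (x0 - x) * (1 - 1/(x*x0))"
      using x1 \<open>x \<ge> 1\<close> unfolding phi_def by (simp add: field_simps)
    then have "(x0 - x) * (1 - 1/(x*x0)) = 0" using px that by simp
    then have "x0 = x \<or> 1/(x*x0) = 1" by simp
    then show ?thesis
    proof
      assume "1/(x*x0) = 1"
      then have xx: "x*x0 = 1" by (simp add: divide_eq_1_iff)
      have "x0 \<le> x * x0" using x1 that by simp
      then have "x0 = 1" using xx x1 by simp
      then show ?thesis using xx by simp
    qed simp
  qed
  have "(THE x. x \<ge> 1 \<and> phi x = y) = x0"
    by (rule the_equality) (use x1 px uniq in blast)+
  then show ?thesis unfolding phi_inv_def using x1 px by simp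
qed



theorem corollary6p3:
  fixes mu_m mu_p K \<epsilon> \<theta>_star \<theta>_f \<theta>_r :: real
  assumes "mu_m < mu_p"
    and "0 \<le> \<epsilon>" and "\<epsilon> \<le> (mu_p - mu_m) / 4"
    and "1 < K"
    and "K \<le> exp ((mu_p - mu_m - 2 * \<epsilon>)\<^sup>2 / 2)"
    and "\<epsilon> > 0 \<longrightarrow> K \<le> phi_inv ((mu_p - mu_m) / \<epsilon> - 2)"
    and "\<theta>_star \<in> {mu_m..mu_p}"
    and "\<forall>\<theta>\<in>{mu_m..mu_p}. R_nat mu_m mu_p K \<theta>_star \<le> R_nat mu_m mu_p K \<theta>"
    and "\<theta>_f \<in> {mu_m..mu_p}"
    and "e_plus mu_p K \<theta>_f = e_minus mu_m \<theta>_f"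
    and "\<theta>_r \<in> {mu_m..mu_p}"
    and "\<forall>\<theta>\<in>{mu_m..mu_p}. R_rob mu_m mu_p K \<epsilon> \<theta>_r \<le> R_rob mu_m mu_p K \<epsilon> \<theta>"
  shows "R_bdy mu_m mu_p K \<epsilon> \<theta>_f \<ge> R_bdy mu_m mu_p K \<epsilon> \<theta>_star
       \<and> R_bdy mu_m mu_p K \<epsilon> \<theta>_star \<ge> R_bdy mu_m mu_p K \<epsilon> \<theta>_r"
proof -
  note mm = assms(1) and e0 = assms(2) and e4 = assms(3) and K1 = assms(4)
  have K0: "K > 0" using K1 by simp
  define d where "d = mu_p - mu_m"
  have d0: "d > 0" using mm d_def by simp
  define p where "p = normal_density mu_p K"
  define q where "q = normal_density mu_m 1"
  define Fp where "Fp = (\<lambda>x. gauss_prob mu_p K {..x})"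
  define Fq where "Fq = (\<lambda>x. gauss_prob mu_m 1 {..x})"
  have dFp: "(Fp has_real_derivative p x) (at x)" for x
    unfolding Fp_def p_def by (rule gp_deriv[OF K0])
  have dFq: "(Fq has_real_derivative q x) (at x)" for x
    unfolding Fq_def q_def by (rule gp_deriv) simp
  have Rnat: "R_nat mu_m mu_p K = (\<lambda>\<theta>. Fp \<theta>/2 + (1 - Fq \<theta>)/2)"
    by (rule ext) (simp add: R_nat_def e_plus_def e_minus_def gp_Ioi Fp_def Fq_def)
  have Rbdy: "R_bdy mu_m mu_p K \<epsilon> = (\<lambda>\<theta>. (Fp (\<theta>+\<epsilon>) - Fp \<theta>)/2 + (Fq \<theta> - Fq (\<theta>-\<epsilon>))/2)"
    by (rule ext) (use e0 K0 in \<open>simp add: R_bdy_def gp_Ioc Fp_def Fq_def\<close>)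
  have Rrob: "R_rob mu_m mu_p K \<epsilon> \<theta> = R_nat mu_m mu_p K \<theta> + R_bdy mu_m mu_p K \<epsilon> \<theta>" for \<theta>
    unfolding Rnat Rbdy by (simp add: R_rob_def gp_Ioi Fp_def Fq_def field_simps)
  have second: "R_bdy mu_m mu_p K \<epsilon> \<theta>_star \<ge> R_bdy mu_m mu_p K \<epsilon> \<theta>_r"
    using assms(7,8,11,12) Rrob[of \<theta>_star] Rrob[of \<theta>_r] by force
  have first: "R_bdy mu_m mu_p K \<epsilon> \<theta>_f \<ge> R_bdy mu_m mu_p K \<epsilon> \<theta>_star"
  proof (cases "\<epsilon> = 0")
    case True then show ?thesis unfolding Rbdy by simp
  next
    case False
    then have ep: "\<epsilon> > 0" using e0 by simp
    have "d / \<epsilon> \<ge> 4" using ep e4 unfolding d_def by (simp add: field_simps)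
    then have y2: "d / \<epsilon> - 2 \<ge> 2" by simp
    have Kphi: "K \<le> phi_inv (d / \<epsilon> - 2)" using assms(6) ep unfolding d_def by simp
    have "phi K \<le> phi (phi_inv (d / \<epsilon> - 2))"
      using K1 Kphi by (intro phi_mono) auto
    then have "K + 1/K \<le> d/\<epsilon> - 2" using phi_inv_prop[OF y2] unfolding phi_def by simp
    then have "\<epsilon> * K * (K + 1/K) \<le> \<epsilon> * K * (d/\<epsilon> - 2)"
      using ep K0 by (intro mult_left_mono) auto
    moreover have "\<epsilon> * K * (K + 1/K) = \<epsilon>*K*K + \<epsilon>" using K0 by (simp add: field_simps)
    moreover have "\<epsilon> * K * (d/\<epsilon> - 2) = K*d - 2*\<epsilon>*K" using ep by (simp add: field_simps)
    moreover have "\<epsilon> * (K+1)\<^sup>2 = \<epsilon>*K*K + 2*\<epsilon>*K + \<epsilon>" by (simp add: power2_eq_square algebra_simps)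
    ultimately have ecore: "\<epsilon> * (K+1)\<^sup>2 \<le> d * K" by (simp add: mult.commute)
    define t0 where "t0 = mu_m + d/(K+1)"
    have t0mm: "mu_m < t0" unfolding t0_def using d0 K0 by simp
    have t0mp: "t0 < mu_p"
    proof -
      have "d/(K+1) < d" using d0 K1 by (simp add: field_simps)
      then show ?thesis unfolding t0_def d_def by simp
    qed
    have sf: "Fp \<theta>_f + Fq \<theta>_f = 1"
      using assms(10) unfolding e_plus_def e_minus_def gp_Ioi[of 1, simplified] Fp_def Fq_def by simp
    have s0: "Fp t0 + Fq t0 = 1"
      unfolding Fp_def Fq_def t0_def d_def by (rule theta0_sum[OF K0])
    have t0f: "\<theta>_f = t0"
    proof (rule ccontr)
      assume "\<theta>_f \<noteq> t0"
      then have "\<theta>_f < t0 \<or> t0 < \<theta>_f" by auto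
      then show False using sum_strict_mono[OF K0, of _ _ mu_p mu_m] sf s0
        unfolding Fp_def Fq_def by fastforce
    qed
    define E where "E = (\<lambda>\<theta>. (\<theta>-mu_m)\<^sup>2/2 - (\<theta>-mu_p)\<^sup>2/(2 * K\<^sup>2))"
    have pq_le: "p \<theta> \<le> q \<theta> \<longleftrightarrow> exp (E \<theta>) \<le> K" for \<theta>
      unfolding p_def q_def E_def by (rule nd_cmp(1)[OF K0])
    have Et0: "E t0 = 0"
    proof -
      have "(t0 - mu_p)\<^sup>2 = K\<^sup>2 * (t0 - mu_m)\<^sup>2"
        unfolding t0_def d_def using K0 by (simp add: field_simps power2_eq_square)
      then show ?thesis unfolding E_def using K0 by simp
    qed
    have Emm: "E mu_m < 0" unfolding E_def using mm K0 by simp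
    have dRnat: "(R_nat mu_m mu_p K has_real_derivative (p \<theta> - q \<theta>)/2) (at \<theta>)" for \<theta>
    proof -
      have "((\<lambda>\<theta>. Fp \<theta>/2 + (1 - Fq \<theta>)/2) has_real_derivative p \<theta>/2 + (0 - q \<theta>)/2) (at \<theta>)"
        by (intro DERIV_add DERIV_cdivide DERIV_diff DERIV_const dFp dFq)
      then show ?thesis unfolding Rnat by (rule DERIV_cong) (simp add: field_simps)
    qed
    have ts_ge: "\<theta>_star \<ge> t0"
    proof (rule ccontr)
      assume "\<not> \<theta>_star \<ge> t0"
      then have lt: "\<theta>_star < t0" by simp
      have "E \<theta>_star \<le> E t0" unfolding E_def
        using assms(7) lt t0mp K0 by (intro E_mono) auto
      then have "exp (E \<theta>_star) \<le> 1" using Et0 by simp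
      then have "exp (E \<theta>_star) < K" using K1 by linarith
      then have "\<not> q \<theta>_star \<le> p \<theta>_star"
        unfolding p_def q_def E_def
        using nd_cmp(2)[OF K0, of mu_p \<theta>_star mu_m \<theta>_star] by simp
      then have neg: "(p \<theta>_star - q \<theta>_star)/2 < 0" by simp
      obtain \<delta> where \<delta>: "\<delta> > 0" "\<forall>h>0. h < \<delta> \<longrightarrow> R_nat mu_m mu_p K \<theta>_star > R_nat mu_m mu_p K (\<theta>_star + h)"
        using DERIV_neg_dec_right[OF dRnat neg] by blast
      define h where "h = min (\<delta>/2) (t0 - \<theta>_star)"
      have h: "h > 0" "h < \<delta>" "\<theta>_star + h \<in> {mu_m..mu_p}"
        unfolding h_def using \<delta> lt t0mp assms(7) by auto
      then show False using \<delta> assms(8) by force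
    qed
    have ts_le: "exp (E \<theta>_star) \<le> K"
    proof (rule ccontr)
      assume nle: "\<not> exp (E \<theta>_star) \<le> K"
      then have "\<not> p \<theta>_star \<le> q \<theta>_star" using pq_le by simp
      then have pos: "(p \<theta>_star - q \<theta>_star)/2 > 0" by simp
      have "\<theta>_star \<noteq> mu_m"
      proof
        assume "\<theta>_star = mu_m"
        then have "exp (E \<theta>_star) < 1" using Emm by simp
        then show False using nle K1 by linarith
      qed
      then have gt: "\<theta>_star > mu_m" using assms(7) by simp
      obtain \<delta> where \<delta>: "\<delta> > 0" "\<forall>h>0. h < \<delta> \<longrightarrow> R_nat mu_m mu_p K (\<theta>_star - h) < R_nat mu_m mu_p K \<theta>_star"
        using DERIV_pos_inc_left[OF dRnat pos] by blast
      define h where "h = min (\<delta>/2) (\<theta>_star - mu_m)"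
      have h: "h > 0" "h < \<delta>" "\<theta>_star - h \<in> {mu_m..mu_p}"
        unfolding h_def using \<delta> gt assms(7) by auto
      then show False using \<delta> assms(8) by force
    qed
    have dp: "(p has_real_derivative (-(x-mu_p)/K\<^sup>2 * p x)) (at x)" for x
      unfolding p_def by (rule nd_deriv[OF K0])
    have dq: "(q has_real_derivative (-(x-mu_m)/1\<^sup>2 * q x)) (at x)" for x
      unfolding q_def by (rule nd_deriv) simp
    have pw: "p (\<theta>+\<epsilon>) - q (\<theta>-\<epsilon>) \<le> p \<theta> - q \<theta>" if th: "t0 \<le> \<theta>" "\<theta> \<le> \<theta>_star" for \<theta>
    proof -
      define x where "x = \<theta> - mu_m"
      have xd: "(K+1) * x \<ge> d"
        using th K0 unfolding x_def t0_def by (simp add: field_simps)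
      have ex: "\<epsilon> < x"
      proof -
        have "\<epsilon> * (K+1) * (K+1) \<le> d * K" using ecore by (simp add: power2_eq_square)
        also have "\<dots> < d * (K+1)" using d0 by simp
        finally have "\<epsilon> * (K+1) < d" using K0 by simp
        then have "\<epsilon> * (K+1) < (K+1) * x" using xd by simp
        then show ?thesis using K0 by (simp add: mult.commute)
      qed
      define k where "k = (\<lambda>t. p (\<theta>+t) - q (\<theta>-t))"
      have "k \<epsilon> \<le> k 0"
      proof (rule DERIV_nonpos_imp_nonincreasing[OF e0])
        fix t assume t: "0 \<le> t" "t \<le> \<epsilon>"
        have hc: "(K\<^sup>2-1)*t \<le> (K\<^sup>2+1)*x - d" by (rule core[OF K1 xd t(1) t(2) ecore])
        have K2: "K\<^sup>2 > 1" using K1 by (simp add: one_less_power)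
        have "(x-t)\<^sup>2/2 - (x+t-d)\<^sup>2/(2 * K\<^sup>2) \<le> x\<^sup>2/2 - (x-d)\<^sup>2/(2 * K\<^sup>2)"
          using K0 t hc K2 by (intro shift) auto
        also have "\<dots> = E \<theta>" unfolding E_def x_def d_def by simp
        also have "\<dots> \<le> E \<theta>_star" unfolding E_def
          using th t0mm assms(7) K0 by (intro E_mono) auto
        finally have "exp ((\<theta>-t-mu_m)\<^sup>2/2 - (\<theta>+t-mu_p)\<^sup>2/(2 * K\<^sup>2)) \<le> K"
          using ts_le unfolding x_def d_def by (smt (verit) exp_le_cancel_iff)
        then have hpq: "p (\<theta>+t) \<le> q (\<theta>-t)"
          unfolding p_def q_def using nd_cmp(1)[OF K0] by simp
        have a0: "\<theta>-t-mu_m \<ge> 0" using ex t unfolding x_def by simp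
        have ab: "-(\<theta>+t-mu_p) \<le> K\<^sup>2 * (\<theta>-t-mu_m)"
          using hc unfolding x_def d_def by (simp add: algebra_simps)
        have p0: "p (\<theta>+t) \<ge> 0" "q (\<theta>-t) \<ge> 0" unfolding p_def q_def by simp_all
        have key: "-(\<theta>+t-mu_p)/K\<^sup>2 * p (\<theta>+t) \<le> (\<theta>-t-mu_m) * q (\<theta>-t)"
        proof (cases "\<theta>+t-mu_p \<ge> 0")
          case True
          have "-(\<theta>+t-mu_p)/K\<^sup>2 * p (\<theta>+t) \<le> 0"
            using True p0 K0 by (intro mult_nonpos_nonneg) (auto simp: divide_nonpos_pos)
          also have "0 \<le> (\<theta>-t-mu_m) * q (\<theta>-t)" using a0 p0 by simp
          finally show ?thesis .
        next
          case False
          have "-(\<theta>+t-mu_p)/K\<^sup>2 \<le> \<theta>-t-mu_m" using ab K0 by (simp add: divide_le_eq mult.commute)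
          then show ?thesis using hpq p0 False K0 a0 by (intro mult_mono) auto
        qed
        show "\<exists>y. (k has_real_derivative y) (at t) \<and> y \<le> 0"
        proof (intro exI conjI)
          show "(k has_real_derivative (-(\<theta>+t-mu_p)/K\<^sup>2 * p (\<theta>+t)) * 1 - (-(\<theta>-t-mu_m)/1\<^sup>2 * q (\<theta>-t)) * (-1)) (at t)"
            unfolding k_def
            by (intro derivative_intros DERIV_chain2[OF dp] DERIV_chain2[OF dq]) (auto intro!: derivative_eq_intros)
          have eq: "(-(\<theta>+t-mu_p)/K\<^sup>2 * p (\<theta>+t)) * 1 - (-(\<theta>-t-mu_m)/1\<^sup>2 * q (\<theta>-t)) * (-1) = -(\<theta>+t-mu_p)/K\<^sup>2 * p (\<theta>+t) - (\<theta>-t-mu_m) * q (\<theta>-t)"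
            by (simp add: algebra_simps)
          show "(-(\<theta>+t-mu_p)/K\<^sup>2 * p (\<theta>+t)) * 1 - (-(\<theta>-t-mu_m)/1\<^sup>2 * q (\<theta>-t)) * (-1) \<le> 0"
            unfolding eq using key by linarith
        qed
      qed
      then show ?thesis unfolding k_def by simp
    qed
    have "R_bdy mu_m mu_p K \<epsilon> \<theta>_star \<le> R_bdy mu_m mu_p K \<epsilon> t0"
    proof (rule DERIV_nonpos_imp_nonincreasing[OF ts_ge])
      fix \<theta> assume th: "t0 \<le> \<theta>" "\<theta> \<le> \<theta>_star"
      show "\<exists>y. (R_bdy mu_m mu_p K \<epsilon> has_real_derivative y) (at \<theta>) \<and> y \<le> 0"
      proof (intro exI conjI)
        show "(R_bdy mu_m mu_p K \<epsilon> has_real_derivative (p (\<theta>+\<epsilon>) * 1 - p \<theta>)/2 + (q \<theta> - q (\<theta>-\<epsilon>) * 1)/2) (at \<theta>)"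
        proof -
          have a: "((\<lambda>z. Fp (z+\<epsilon>)) has_real_derivative p (\<theta>+\<epsilon>) * 1) (at \<theta>)"
            by (rule DERIV_chain2[OF dFp]) (auto intro!: derivative_eq_intros)
          have b: "((\<lambda>z. Fq (z-\<epsilon>)) has_real_derivative q (\<theta>-\<epsilon>) * 1) (at \<theta>)"
            by (rule DERIV_chain2[OF dFq]) (auto intro!: derivative_eq_intros)
          show ?thesis unfolding Rbdy
            by (intro DERIV_add DERIV_cdivide DERIV_diff a b dFp dFq)
        qed
        show "(p (\<theta>+\<epsilon>) * 1 - p \<theta>)/2 + (q \<theta> - q (\<theta>-\<epsilon>) * 1)/2 \<le> 0"
          using pw[OF th] by (simp add: field_simps)
      qed
    qed
    then show ?thesis using t0f by simp
  qed
  show ?thesis using first second by simp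
qed


end
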